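(* Let $\mu\in(0,1/2]$. For every $c<c_J$, both $R^E_{\text{ext}}(c)<2$ and $R^M_{\text{ext}}(c)<2$.
   Context: $c_J=-1-2\sqrt{\mu(1-\mu)}$. $K(k)=\int_0^{\pi/2}(1-k^2\sin^2\theta)^{-1/2}d\theta$ is the complete elliptic integral of the first kind. $R^E_{\text{ext}}(c)=\frac{\pi}{2}\frac{1}{\sqrt{1-2k_E^2}K(k_E)}$ with $k_E^2=\frac12\big(1-\frac{1-2\mu-c}{\sqrt{c^2-2(1-2\mu)c+1}}\big)$, and $R^M_{\text{ext}}(c)=\frac{\pi}{2}\frac{1}{\sqrt{1-2k_M^2}K(k_M)}$ with $k_M^2=\frac12\big(1+\frac{c+1-2\mu}{\sqrt{c^2+2(1-2\mu)c+1}}\big)$; these are the rotation numbers of the exterior collision orbits of the Euler problem (mass ratio $\mu$) near the Earth and near the Moon. *)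

theory Defs
  imports "HOL-Analysis.Analysis"
begin

definition ellK :: "real \<Rightarrow> real" where
  "ellK k = integral {0..pi/2} (\<lambda>\<theta>. 1 / sqrt (1 - k\<^sup>2 * (sin \<theta>)\<^sup>2))"

definition cJ :: "real \<Rightarrow> real" where
  "cJ \<mu> = -1 - 2 * sqrt (\<mu> * (1 - \<mu>))"

definition kE2 :: "real \<Rightarrow> real \<Rightarrow> real" where
  "kE2 \<mu> c = (1/2) * (1 - (1 - 2*\<mu> - c) / sqrt (c\<^sup>2 - 2*(1 - 2*\<mu>)*c + 1))"

definition kM2 :: "real \<Rightarrow> real \<Rightarrow> real" where
  "kM2 \<mu> c = (1/2) * (1 + (c + 1 - 2*\<mu>) / sqrt (c\<^sup>2 + 2*(1 - 2*\<mu>)*c + 1))"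

definition R_E_ext :: "real \<Rightarrow> real \<Rightarrow> real" where
  "R_E_ext \<mu> c = (pi/2) * (1 / (sqrt (1 - 2 * kE2 \<mu> c) * ellK (sqrt (kE2 \<mu> c))))"

definition R_M_ext :: "real \<Rightarrow> real \<Rightarrow> real" where
  "R_M_ext \<mu> c = (pi/2) * (1 / (sqrt (1 - 2 * kM2 \<mu> c) * ellK (sqrt (kM2 \<mu> c))))"

end

theory Submission
  imports Defs
begin

lemma ellK_ge:
  assumes "0 \<le> k2" "k2 < 1"
  shows "pi/2 \<le> ellK (sqrt k2)"
proof -
  let ?f = "\<lambda>\<theta>::real. 1 / sqrt (1 - (sqrt k2)\<^sup>2 * (sin \<theta>)\<^sup>2)"
  have pos: "0 < 1 - (sqrt k2)\<^sup>2 * (sin t)\<^sup>2" for t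
  proof -
    have "(sin t)\<^sup>2 \<le> 1" by (simp add: abs_square_le_1)
    hence "k2 * (sin t)\<^sup>2 \<le> k2" using assms by (simp add: mult_left_le)
    thus ?thesis using assms by simp
  qed
  have ge1: "1 \<le> ?f t" for t
  proof -
    have "1 - (sqrt k2)\<^sup>2 * (sin t)\<^sup>2 \<le> 1" using assms by simp
    hence "sqrt (1 - (sqrt k2)\<^sup>2 * (sin t)\<^sup>2) \<le> 1" by simp
    moreover have "0 < sqrt (1 - (sqrt k2)\<^sup>2 * (sin t)\<^sup>2)" using pos[of t] by simp
    ultimately show ?thesis by simp
  qed
  have cont: "continuous_on {0..pi/2} ?f"
    using pos by (intro continuous_intros) (auto simp: less_imp_neq[symmetric])
  have "integral {0..pi/2} (\<lambda>_. 1::real) \<le> integral {0..pi/2} ?f"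
    by (rule integral_le) (use cont ge1 in \<open>auto intro: integrable_continuous_interval\<close>)
  thus ?thesis by (simp add: ellK_def)
qed

lemma R_lt2:
  assumes "0 \<le> k2" "1 - 2*k2 > 1/4"
  shows "(pi/2) * (1 / (sqrt (1 - 2 * k2) * ellK (sqrt k2))) < 2"
proof -
  have K: "pi/2 \<le> ellK (sqrt k2)" using ellK_ge assms by simp
  have s: "sqrt (1 - 2*k2) > 1/2"
    using assms real_less_rsqrt[of "1/2" "1 - 2*k2"] by (simp add: power2_eq_square)
  have nn: "0 \<le> 1 - 2*k2" using assms by simp
  have "sqrt (1 - 2*k2) * (pi/2) \<le> sqrt (1 - 2*k2) * ellK (sqrt k2)"
    using K nn by (intro mult_left_mono) auto
  moreover have "sqrt (1 - 2*k2) * (pi/2) > pi/4" using mult_strict_right_mono[OF s, of "pi/2"] pi_gt_zero by simp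
  ultimately have "sqrt (1 - 2*k2) * ellK (sqrt k2) > pi/4" by linarith
  moreover have "pi/4 > 0" using pi_gt_zero by simp
  ultimately have P: "sqrt (1 - 2*k2) * ellK (sqrt k2) > 0" "pi/2 < 2 * (sqrt (1 - 2*k2) * ellK (sqrt k2))" by linarith+
  hence "(pi/2) / (sqrt (1 - 2*k2) * ellK (sqrt k2)) < 2"
    by (subst divide_less_eq) simp
  thus ?thesis by simp
qed

theorem mainTheorem10:
  fixes \<mu> c :: real
  assumes "0 < \<mu>" and "\<mu> \<le> 1/2" and "c < cJ \<mu>"
  shows "R_E_ext \<mu> c < 2 \<and> R_M_ext \<mu> c < 2"
proof -
  define a where "a = 1 - 2*\<mu>"
  define s where "s = sqrt (\<mu> * (1 - \<mu>))"
  have a0: "0 \<le> a" "a < 1" using assms a_def by auto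
  have s0: "0 \<le> s" using assms s_def by simp
  have s2: "s\<^sup>2 = \<mu> * (1 - \<mu>)" using assms s_def by simp
  have cc: "c < - 1 - 2 * s" using assms(3) by (simp add: cJ_def s_def)
  have a2: "a\<^sup>2 \<le> 1" using a0 by (simp add: power_le_one)
  define DE where "DE = c\<^sup>2 - 2*a*c + 1"
  have DE: "DE = (a - c)\<^sup>2 + (1 - a\<^sup>2)" by (simp add: DE_def power2_eq_square algebra_simps)
  have amc: "a - c > 1" using cc s0 a0 by linarith
  have amc2: "(a - c)\<^sup>2 > 1" using amc by (simp add: one_less_power)
  have DEpos: "DE > 0" using DE amc2 a2 zero_le_power2[of a] by linarith
  have sqE: "sqrt DE \<ge> a - c" using DE a2 by (intro real_le_rsqrt) linarith
  have sqE2: "sqrt DE < 4*(a - c)"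
  proof -
    have "(4*(a-c))\<^sup>2 = 16 * (a-c)\<^sup>2" by (simp add: power2_eq_square algebra_simps)
    hence "DE < (4*(a-c))\<^sup>2" using DE amc2 a2 zero_le_power2[of a] by linarith
    thus ?thesis using amc DEpos by (simp add: real_sqrt_less_iff real_less_lsqrt)
  qed
  have kE: "kE2 \<mu> c = (1/2) * (1 - (a - c)/sqrt DE)" by (simp add: kE2_def DE_def a_def)
  have rE: "(a - c)/sqrt DE > 1/4" using sqE2 amc DEpos by (simp add: divide_simps)
  have rE1: "(a - c)/sqrt DE \<le> 1" using sqE DEpos by (simp add: divide_simps)
  have E: "R_E_ext \<mu> c < 2" unfolding R_E_ext_def
    proof (rule R_lt2)
    define r where "r = (a - c)/sqrt DE"
    have "kE2 \<mu> c = (1/2) * (1 - r)" "r > 1/4" "r \<le> 1" using kE rE rE1 by (simp_all add: r_def)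
    thus "0 \<le> kE2 \<mu> c" by auto
    show "1 - 2 * kE2 \<mu> c > 1/4" using \<open>kE2 \<mu> c = (1/2) * (1 - r)\<close> \<open>r > 1/4\<close> by auto
  qed
  define DM where "DM = c\<^sup>2 + 2*a*c + 1"
  have DM: "DM = (c + a)\<^sup>2 + (1 - a\<^sup>2)" by (simp add: DM_def power2_eq_square algebra_simps)
  have cpa: "-(c + a) > 2 * s" using cc a_def assms by linarith
  have aa: "1 - a\<^sup>2 = 4 * s\<^sup>2" unfolding a_def s2 by (simp add: power2_eq_square algebra_simps)
  have cpa2: "(c+a)\<^sup>2 > (2 * s)\<^sup>2"
  proof -
    have "(2 * s)\<^sup>2 < (-(c+a))\<^sup>2" using cpa s0 by (intro power_strict_mono) auto
    thus ?thesis by (metis power2_minus)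
  qed
  have cpa3: "(c+a)\<^sup>2 > 4 * s\<^sup>2" using cpa2 by (simp add: power_mult_distrib)
  have DMpos: "DM > 0" using DM cpa3 aa by (smt (verit) zero_le_power2)
  have sqM: "sqrt DM \<ge> -(c + a)"
  proof -
    have "(-(c+a))\<^sup>2 \<le> DM" using DM aa zero_le_power2[of s] power2_minus[of "c+a"] by linarith
    thus ?thesis by (rule real_le_rsqrt)
  qed
  have sqM2: "sqrt DM < 4*(-(c + a))"
  proof -
    have "(4*(-(c+a)))\<^sup>2 = 16 * (c+a)\<^sup>2" by (simp add: power2_eq_square algebra_simps)
    hence "DM < (4*(-(c+a)))\<^sup>2" using DM aa cpa3 zero_le_power2[of s] by linarith
    thus ?thesis using cpa s0 DMpos by (simp add: real_less_lsqrt)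
  qed
  have kM: "kM2 \<mu> c = (1/2) * (1 - (-(c+a))/sqrt DM)"
  proof -
    have e1: "c + 1 - 2*\<mu> = c + a" by (simp add: a_def)
    have e2: "c\<^sup>2 + 2*(1 - 2*\<mu>)*c + 1 = DM" by (simp add: DM_def a_def)
    show ?thesis unfolding kM2_def e1 e2 by (simp add: minus_divide_left)
  qed
  have rM: "(-(c+a))/sqrt DM > 1/4" using sqM2 cpa s0 DMpos by (simp add: divide_simps)
  have rM1: "(-(c+a))/sqrt DM \<le> 1" using sqM DMpos by (simp add: divide_simps)
  have M: "R_M_ext \<mu> c < 2" unfolding R_M_ext_def
    proof (rule R_lt2)
    define r where "r = (-(c+a))/sqrt DM"
    have "kM2 \<mu> c = (1/2) * (1 - r)" "r > 1/4" "r \<le> 1" using kM rM rM1 by (simp_all add: r_def)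
    thus "0 \<le> kM2 \<mu> c" by auto
    show "1 - 2 * kM2 \<mu> c > 1/4" using \<open>kM2 \<mu> c = (1/2) * (1 - r)\<close> \<open>r > 1/4\<close> by auto
  qed
  show ?thesis using E M by simp
qed

end
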